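(* Let $X$ be a finite connected poset and $\theta\in\mathcal{M}(X)$. Then $\theta\in\mathcal{AM}(X)$ if and only if $s^+_{\theta,\Gamma}(z)-s^-_{\theta,\Gamma}(z)=t^+_{\theta,\Gamma}(z)-t^-_{\theta,\Gamma}(z)$ holds for every $z\in X$ and every weak crown $\Gamma$ in $X$, i.e. every closed semiwalk $\Gamma: x_1<y_1>x_2<y_2>\dots>x_n<y_n>x_1$ with $n\ge2$ and $x_1,\dots,x_n,y_1,\dots,y_n$ pairwise distinct.
   Context: For $x<y$, $e_{xy}$ denotes the incidence-algebra basis element and $B=\{e_{xy}:x<y\}$. For a bijection $\theta:B\to B$ and a maximal chain $C:u_1<\dots<u_k$, $\theta$ is increasing on $C$ if there is a maximal chain $D:v_1<\dots<v_k$ with $\theta(e_{u_iu_j})=e_{v_iv_j}$ for all $i<j$, decreasing if $\theta(e_{u_iu_j})=e_{v_{k-j+1}v_{k-i+1}}$ for all $i<j$. $\mathcal{M}(X)$ is the set of bijections $B\to B$ increasing or decreasing on every maximal chain. A semiwalk is a sequence $u_0,\dots,u_m$ with $u_i<u_{i+1}$ or $u_i>u_{i+1}$ for each $i$; a walk is a semiwalk in which one of $u_i,u_{i+1}$ covers the other for each $i$; closed if $u_0=u_m$. For a closed semiwalk $\Gamma:u_0,\dots,u_m=u_0$ and $z\in X$: $s^+_{\theta,\Gamma}(z)=|\{i: u_i<u_{i+1},\ \exists w>z,\ \theta(e_{zw})=e_{u_iu_{i+1}}\}|$, $s^-_{\theta,\Gamma}(z)=|\{i: u_i>u_{i+1},\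 \exists w>z,\ \theta(e_{zw})=e_{u_{i+1}u_i}\}|$, $t^+_{\theta,\Gamma}(z)=|\{i: u_i<u_{i+1},\ \exists w<z,\ \theta(e_{wz})=e_{u_iu_{i+1}}\}|$, $t^-_{\theta,\Gamma}(z)=|\{i: u_i>u_{i+1},\ \exists w<z,\ \theta(e_{wz})=e_{u_{i+1}u_i}\}|$, $0\le i\le m-1$. $\theta$ is admissible if $s^+-s^-=t^+-t^-$ at every $z$ for every closed walk; $\mathcal{AM}(X)$ is the set of admissible elements of $\mathcal{M}(X)$. A weak $n$-crown is a poset on distinct $x_1,\dots,x_n,y_1,\dots,y_n$ with $x_i<y_i$, $x_{i+1}<y_i$ ($i<n$) and $x_1<y_n$ (further comparabilities allowed). *)

theory Defs
  imports Main
begin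

text \<open>A poset is a carrier set X :: 'a set with the order inherited from the type class
  order on 'a.  The basis element e_xy (x < y) is represented by the pair (x, y);
  B = {(x,y). x,y in X, x < y}.\<close>

definition basis :: "'a::order set \<Rightarrow> ('a \<times> 'a) set" where
  "basis X = {(x, y). x \<in> X \<and> y \<in> X \<and> x < y}"

definition is_chain :: "'a::order set \<Rightarrow> 'a set \<Rightarrow> bool" where
  "is_chain X C \<longleftrightarrow> C \<subseteq> X \<and> (\<forall>x\<in>C. \<forall>y\<in>C. x \<le> y \<or> y \<le> x)"

definition maximal_chain :: "'a::order set \<Rightarrow> 'a set \<Rightarrow> bool" where
  "maximal_chain X C \<longleftrightarrow> is_chain X C \<and> (\<forall>D. is_chain X D \<and> C \<subseteq> D \<longrightarrow> D = C)"

text \<open>A maximal chain written as its strictly increasing list u_1 < ... < u_k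
  (indices shifted to start at 0).\<close>
definition max_chain_list :: "'a::order set \<Rightarrow> 'a list \<Rightarrow> bool" where
  "max_chain_list X us \<longleftrightarrow> sorted_wrt (<) us \<and> maximal_chain X (set us)"

definition increasing_on ::
  "'a::order set \<Rightarrow> ('a \<times> 'a \<Rightarrow> 'a \<times> 'a) \<Rightarrow> 'a list \<Rightarrow> bool" where
  "increasing_on X \<theta> us \<longleftrightarrow>
     (\<exists>vs. max_chain_list X vs \<and> length vs = length us \<and>
        (\<forall>i j. i < j \<and> j < length us \<longrightarrow> \<theta> (us ! i, us ! j) = (vs ! i, vs ! j)))"

definition decreasing_on ::
  "'a::order set \<Rightarrow> ('a \<times> 'a \<Rightarrow> 'a \<times> 'a) \<Rightarrow> 'a list \<Rightarrow> bool" where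
  "decreasing_on X \<theta> us \<longleftrightarrow>
     (\<exists>vs. max_chain_list X vs \<and> length vs = length us \<and>
        (\<forall>i j. i < j \<and> j < length us \<longrightarrow>
           \<theta> (us ! i, us ! j) = (vs ! (length us - 1 - j), vs ! (length us - 1 - i))))"

definition M_set :: "'a::order set \<Rightarrow> ('a \<times> 'a \<Rightarrow> 'a \<times> 'a) set" where
  "M_set X = {\<theta>. bij_betw \<theta> (basis X) (basis X) \<and>
     (\<forall>us. max_chain_list X us \<longrightarrow> increasing_on X \<theta> us \<or> decreasing_on X \<theta> us)}"

definition covers :: "'a::order set \<Rightarrow> 'a \<Rightarrow> 'a \<Rightarrow> bool" where
  "covers X x y \<longleftrightarrow> x \<in> X \<and> y \<in> X \<and> x < y \<and> \<not> (\<exists>z\<in>X. x < z \<and> z < y)"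

definition semiwalk :: "'a::order set \<Rightarrow> 'a list \<Rightarrow> bool" where
  "semiwalk X us \<longleftrightarrow> us \<noteq> [] \<and> set us \<subseteq> X \<and>
     (\<forall>i. Suc i < length us \<longrightarrow> us ! i < us ! Suc i \<or> us ! Suc i < us ! i)"

definition walk :: "'a::order set \<Rightarrow> 'a list \<Rightarrow> bool" where
  "walk X us \<longleftrightarrow> semiwalk X us \<and>
     (\<forall>i. Suc i < length us \<longrightarrow> covers X (us ! i) (us ! Suc i) \<or> covers X (us ! Suc i) (us ! i))"

definition closed_walk :: "'a list \<Rightarrow> bool" where
  "closed_walk us \<longleftrightarrow> us \<noteq> [] \<and> hd us = last us"

definition poset_connected :: "'a::order set \<Rightarrow> bool" where
  "poset_connected X \<longleftrightarrow>
     (\<forall>x\<in>X. \<forall>y\<in>X. \<exists>us. semiwalk X us \<and> hd us = x \<and> last us = y)"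

text \<open>The counting functions; indices i range over 0 <= i <= m-1 where m+1 = length us.\<close>
definition s_plus :: "'a::order set \<Rightarrow> ('a \<times> 'a \<Rightarrow> 'a \<times> 'a) \<Rightarrow> 'a list \<Rightarrow> 'a \<Rightarrow> nat" where
  "s_plus X \<theta> us z = card {i. Suc i < length us \<and> us ! i < us ! Suc i \<and>
      (\<exists>w\<in>X. z < w \<and> \<theta> (z, w) = (us ! i, us ! Suc i))}"

definition s_minus :: "'a::order set \<Rightarrow> ('a \<times> 'a \<Rightarrow> 'a \<times> 'a) \<Rightarrow> 'a list \<Rightarrow> 'a \<Rightarrow> nat" where
  "s_minus X \<theta> us z = card {i. Suc i < length us \<and> us ! Suc i < us ! i \<and>
      (\<exists>w\<in>X. z < w \<and> \<theta> (z, w) = (us ! Suc i, us ! i))}"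

definition t_plus :: "'a::order set \<Rightarrow> ('a \<times> 'a \<Rightarrow> 'a \<times> 'a) \<Rightarrow> 'a list \<Rightarrow> 'a \<Rightarrow> nat" where
  "t_plus X \<theta> us z = card {i. Suc i < length us \<and> us ! i < us ! Suc i \<and>
      (\<exists>w\<in>X. w < z \<and> \<theta> (w, z) = (us ! i, us ! Suc i))}"

definition t_minus :: "'a::order set \<Rightarrow> ('a \<times> 'a \<Rightarrow> 'a \<times> 'a) \<Rightarrow> 'a list \<Rightarrow> 'a \<Rightarrow> nat" where
  "t_minus X \<theta> us z = card {i. Suc i < length us \<and> us ! Suc i < us ! i \<and>
      (\<exists>w\<in>X. w < z \<and> \<theta> (w, z) = (us ! Suc i, us ! i))}"

definition balanced_at ::
  "'a::order set \<Rightarrow> ('a \<times> 'a \<Rightarrow> 'a \<times> 'a) \<Rightarrow> 'a list \<Rightarrow> 'a \<Rightarrow> bool" where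
  "balanced_at X \<theta> us z \<longleftrightarrow>
     int (s_plus X \<theta> us z) - int (s_minus X \<theta> us z) =
     int (t_plus X \<theta> us z) - int (t_minus X \<theta> us z)"

definition admissible :: "'a::order set \<Rightarrow> ('a \<times> 'a \<Rightarrow> 'a \<times> 'a) \<Rightarrow> bool" where
  "admissible X \<theta> \<longleftrightarrow>
     (\<forall>us z. walk X us \<and> closed_walk us \<and> z \<in> X \<longrightarrow> balanced_at X \<theta> us z)"

definition AM_set :: "'a::order set \<Rightarrow> ('a \<times> 'a \<Rightarrow> 'a \<times> 'a) set" where
  "AM_set X = {\<theta> \<in> M_set X. admissible X \<theta>}"

text \<open>A weak crown in X: the closed semiwalk x_1 < y_1 > x_2 < y_2 > ... > x_n < y_n > x_1
  with n >= 2 and all x_i, y_i pairwise distinct (0-indexed lists xs, ys).\<close>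
definition crown_list :: "'a list \<Rightarrow> 'a list \<Rightarrow> 'a list" where
  "crown_list xs ys = concat (map (\<lambda>i. [xs ! i, ys ! i]) [0..<length xs]) @ [xs ! 0]"

definition weak_crown :: "'a::order set \<Rightarrow> 'a list \<Rightarrow> 'a list \<Rightarrow> bool" where
  "weak_crown X xs ys \<longleftrightarrow>
     length xs = length ys \<and> length xs \<ge> 2 \<and> distinct (xs @ ys) \<and>
     set xs \<subseteq> X \<and> set ys \<subseteq> X \<and>
     (\<forall>i < length xs. xs ! i < ys ! i) \<and>
     (\<forall>i. Suc i < length xs \<longrightarrow> xs ! Suc i < ys ! i) \<and>
     xs ! 0 < ys ! (length xs - 1)"

end

theory Submission
  imports Defs
begin


fun adj :: "('a \<Rightarrow> 'a \<Rightarrow> bool) \<Rightarrow> 'a list \<Rightarrow> bool" where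
  "adj R (a # b # r) = (R a b \<and> adj R (b # r))"
| "adj R _ = True"

fun wsum :: "('a \<Rightarrow> 'a \<Rightarrow> int) \<Rightarrow> 'a list \<Rightarrow> int" where
  "wsum f (a # b # r) = f a b + wsum f (b # r)"
| "wsum f _ = 0"

lemma adj_nth: "adj R L \<longleftrightarrow> (\<forall>i. Suc i < length L \<longrightarrow> R (L!i) (L!Suc i))"
proof (induction L rule: induct_list012)
  case (3 a b r)
  show ?case
  proof
    assume "adj R (a # b # r)"
    then show "\<forall>i. Suc i < length (a # b # r) \<longrightarrow> R ((a # b # r) ! i) ((a # b # r) ! Suc i)"
      using 3 by (auto simp: nth_Cons split: nat.splits)
  next
    assume h: "\<forall>i. Suc i < length (a # b # r) \<longrightarrow> R ((a # b # r) ! i) ((a # b # r) ! Suc i)"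
    have "R a b" using h[rule_format, of 0] by simp
    moreover have "adj R (b # r)" unfolding 3(2)
    proof (intro allI impI)
      fix i assume "Suc i < length (b # r)"
      then show "R ((b # r) ! i) ((b # r) ! Suc i)" using h[rule_format, of "Suc i"] by simp
    qed
    ultimately show "adj R (a # b # r)" by simp
  qed
qed auto

lemma adj_append: "adj R (xs @ y # ys) \<longleftrightarrow> adj R (xs @ [y]) \<and> adj R (y # ys)"
  by (induction xs rule: induct_list012) auto

lemma adj_snoc: "xs \<noteq> [] \<Longrightarrow> adj R (xs @ [y]) \<longleftrightarrow> adj R xs \<and> R (last xs) y"
  by (induction xs rule: induct_list012) auto

lemma wsum_append: "wsum f (xs @ y # ys) = wsum f (xs @ [y]) + wsum f (y # ys)"
  by (induction xs rule: induct_list012) auto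

lemma wsum_snoc: "xs \<noteq> [] \<Longrightarrow> wsum f (xs @ [y]) = wsum f xs + f (last xs) y"
  by (induction xs rule: induct_list012) auto

lemma wsum_nth: "wsum f L = (\<Sum>i<length L - 1. f (L!i) (L!Suc i))"
proof (induction L rule: induct_list012)
  case (3 a b r)
  have "wsum f (a # b # r) = f a b + (\<Sum>i<length r. f ((b#r)!i) ((b#r)!Suc i))"
    using 3 by simp
  also have "\<dots> = (\<Sum>i<Suc (length r). f ((a#b#r)!i) ((a#b#r)!Suc i))"
    by (subst sum.lessThan_Suc_shift) simp
  finally show ?case by simp
qed auto

lemma adj_rev: "adj R (rev L) \<longleftrightarrow> adj (\<lambda>a b. R b a) L"
proof (induction L rule: induct_list012)
  case (3 a b r)
  have "rev (a # b # r) = rev r @ b # [a]" by simp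
  then have "adj R (rev (a # b # r)) = (adj R (rev r @ [b]) \<and> R b a)"
    using adj_append[of R "rev r" b "[a]"] by simp
  then show ?case using 3 by auto
qed auto

lemma wsum_rev:
  assumes anti: "\<And>a b. f b a = - f a b"
  shows "wsum f (rev L) = - wsum f L"
proof (induction L rule: induct_list012)
  case (3 a b r)
  have "rev (a # b # r) = rev r @ b # [a]" by simp
  then have "wsum f (rev (a # b # r)) = wsum f (rev r @ [b]) + f b a"
    using wsum_append[of f "rev r" b "[a]"] by simp
  also have "\<dots> = - wsum f (b # r) - f a b" using 3 anti[of a b] by simp
  finally show ?case by simp
qed auto

lemma sorted_set_unique:
  fixes xs ys :: "'a::order list"
  shows "sorted_wrt (<) xs \<Longrightarrow> sorted_wrt (<) ys \<Longrightarrow> set xs = set ys \<Longrightarrow> xs = ys"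
proof (induction xs arbitrary: ys)
  case Nil then show ?case by simp
next
  case (Cons x xs)
  then obtain y ys' where ys: "ys = y # ys'" by (cases ys) auto
  have "x = y"
  proof (rule ccontr)
    assume "x \<noteq> y"
    then have "x \<in> set ys'" "y \<in> set xs" using Cons.prems ys by auto
    then have "y < x" "x < y" using Cons.prems ys by auto
    then show False by simp
  qed
  moreover have "set xs = set ys'"
  proof -
    have "x \<notin> set xs" "y \<notin> set ys'" using Cons.prems ys by auto
    then show ?thesis using Cons.prems ys \<open>x = y\<close> by auto
  qed
  ultimately show ?case using Cons ys by simp
qed

lemma sorted_mono:
  fixes vs :: "'a::order list"
  shows "sorted_wrt (<) vs \<Longrightarrow> i \<le> j \<Longrightarrow> j < length vs \<Longrightarrow> vs!i \<le> vs!j"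
proof (cases "i = j")
  case False
  assume "sorted_wrt (<) vs" "i \<le> j" "j < length vs"
  then show ?thesis using False sorted_wrt_nth_less[of "(<)" vs i j] by simp
qed simp

lemma sorted_idx:
  fixes vs :: "'a::order list"
  shows "sorted_wrt (<) vs \<Longrightarrow> i < length vs \<Longrightarrow> j < length vs \<Longrightarrow> vs!i < vs!j \<Longrightarrow> i < j"
  by (metis sorted_mono leD not_le)

lemma chain_list_exists:
  fixes D :: "'a::order set"
  shows "finite D \<Longrightarrow> (\<forall>x\<in>D. \<forall>y\<in>D. x \<le> y \<or> y \<le> x) \<Longrightarrow> \<exists>vs. sorted_wrt (<) vs \<and> set vs = D"
proof (induction "card D" arbitrary: D)
  case 0
  then show ?case by auto
next
  case (Suc n)
  then have "D \<noteq> {}" by auto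
  then obtain m where m: "m \<in> D" "\<forall>b\<in>D. m \<le> b \<longrightarrow> m = b"
    using finite_has_maximal[OF Suc.prems(1)] by blast
  have mx: "\<forall>b\<in>D - {m}. b < m" using m Suc.prems(2) by (metis Diff_iff insertI1 order.order_iff_strict)
  have cd: "n = card (D - {m})" using Suc.hyps(2) m by simp
  obtain vs where vs: "sorted_wrt (<) vs" "set vs = D - {m}"
    using Suc.hyps(1)[OF cd] Suc.prems by auto
  show ?case
    by (rule exI[of _ "vs @ [m]"]) (use vs mx m in \<open>auto simp: sorted_wrt_append\<close>)
qed

definition cmpr :: "'a::order \<Rightarrow> 'a \<Rightarrow> bool" where
  "cmpr a b \<longleftrightarrow> a < b \<or> b < a"

definition covr :: "'a::order set \<Rightarrow> 'a \<Rightarrow> 'a \<Rightarrow> bool" where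
  "covr X a b \<longleftrightarrow> covers X a b \<or> covers X b a"

lemma semiwalk_iff: "semiwalk X L \<longleftrightarrow> L \<noteq> [] \<and> set L \<subseteq> X \<and> adj cmpr L"
  by (simp add: semiwalk_def adj_nth cmpr_def)

lemma walk_iff: "walk X L \<longleftrightarrow> L \<noteq> [] \<and> set L \<subseteq> X \<and> adj cmpr L \<and> adj (covr X) L"
  by (simp add: walk_def semiwalk_def adj_nth cmpr_def covr_def)



locale ctx =
  fixes X :: "'a::order set" and \<theta> :: "'a \<times> 'a \<Rightarrow> 'a \<times> 'a"
  assumes finX: "finite X" and thM: "\<theta> \<in> M_set X"
begin

lemma bij: "bij_betw \<theta> (basis X) (basis X)" using thM by (simp add: M_set_def)
lemma injb: "inj_on \<theta> (basis X)" using bij by (rule bij_betw_imp_inj_on)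
lemma imgb: "\<theta> ` basis X = basis X" using bij by (rule bij_betw_imp_surj_on)

definition tinv where "tinv = the_inv_into (basis X) \<theta>"

lemma tinv_in: "p \<in> basis X \<Longrightarrow> tinv p \<in> basis X"
  unfolding tinv_def using the_inv_into_into[OF injb] imgb by blast

lemma th_tinv: "p \<in> basis X \<Longrightarrow> \<theta> (tinv p) = p"
  unfolding tinv_def using f_the_inv_into_f[OF injb] imgb by blast

lemma tinv_eq: "q \<in> basis X \<Longrightarrow> \<theta> q = p \<Longrightarrow> tinv p = q"
  unfolding tinv_def using the_inv_into_f_eq[OF injb] by blast

lemma s_char:
  assumes p: "p \<in> basis X" and z: "z \<in> X"
  shows "(\<exists>w\<in>X. z < w \<and> \<theta> (z,w) = p) \<longleftrightarrow> fst (tinv p) = z"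
proof
  assume "\<exists>w\<in>X. z < w \<and> \<theta> (z,w) = p"
  then obtain w where "w \<in> X" "z < w" "\<theta> (z,w) = p" by blast
  then have "tinv p = (z,w)" using tinv_eq[of "(z,w)" p] z by (simp add: basis_def)
  then show "fst (tinv p) = z" by simp
next
  assume h: "fst (tinv p) = z"
  obtain a b where ab: "tinv p = (a,b)" by (cases "tinv p")
  then have "(a,b) \<in> basis X" using tinv_in[OF p] by simp
  then show "\<exists>w\<in>X. z < w \<and> \<theta> (z,w) = p"
    using ab h th_tinv[OF p] by (auto simp: basis_def)
qed

lemma t_char:
  assumes p: "p \<in> basis X" and z: "z \<in> X"
  shows "(\<exists>w\<in>X. w < z \<and> \<theta> (w,z) = p) \<longleftrightarrow> snd (tinv p) = z"
proof
  assume "\<exists>w\<in>X. w < z \<and> \<theta> (w,z) = p"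
  then obtain w where "w \<in> X" "w < z" "\<theta> (w,z) = p" by blast
  then have "tinv p = (w,z)" using tinv_eq[of "(w,z)" p] z by (simp add: basis_def)
  then show "snd (tinv p) = z" by simp
next
  assume h: "snd (tinv p) = z"
  obtain a b where ab: "tinv p = (a,b)" by (cases "tinv p")
  then have "(a,b) \<in> basis X" using tinv_in[OF p] by simp
  then show "\<exists>w\<in>X. w < z \<and> \<theta> (w,z) = p"
    using ab h th_tinv[OF p] by (auto simp: basis_def)
qed

definition phi :: "'a \<Rightarrow> 'a \<times> 'a \<Rightarrow> int" where
  "phi z p = (if fst (tinv p) = z then 1 else 0) - (if snd (tinv p) = z then 1 else 0)"

definition wt :: "'a \<Rightarrow> 'a \<Rightarrow> 'a \<Rightarrow> int" where
  "wt z a b = (if a < b then phi z (a,b) else if b < a then - phi z (b,a) else 0)"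

lemma wt_anti: "wt z b a = - wt z a b"
  by (auto simp: wt_def)

lemma balanced_iff:
  assumes L: "set L \<subseteq> X" "adj cmpr L" and z: "z \<in> X"
  shows "balanced_at X \<theta> L z \<longleftrightarrow> wsum (wt z) L = 0"
proof -
  define m where "m = length L - 1"
  have cardI: "int (card {i. Suc i < length L \<and> P i}) = (\<Sum>i<m. if P i then 1 else 0)" for P
  proof -
    have "{i. Suc i < length L \<and> P i} = {i \<in> {..<m}. P i}" by (auto simp: m_def)
    then have "int (card {i. Suc i < length L \<and> P i}) = (\<Sum>i\<in>{i \<in> {..<m}. P i}. 1)" by simp
    also have "\<dots> = (\<Sum>i<m. if P i then 1 else 0)" by (rule sum.inter_filter) simp
    finally show ?thesis .
  qed
  have step: "((if L!i < L!Suc i \<and> (\<exists>w\<in>X. z < w \<and> \<theta> (z,w) = (L!i, L!Suc i)) then 1 else 0)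
      - (if L!Suc i < L!i \<and> (\<exists>w\<in>X. z < w \<and> \<theta> (z,w) = (L!Suc i, L!i)) then 1 else 0))
      - ((if L!i < L!Suc i \<and> (\<exists>w\<in>X. w < z \<and> \<theta> (w,z) = (L!i, L!Suc i)) then 1 else 0)
      - (if L!Suc i < L!i \<and> (\<exists>w\<in>X. w < z \<and> \<theta> (w,z) = (L!Suc i, L!i)) then 1 else 0))
      = (wt z (L!i) (L!Suc i) :: int)" if i: "i < m" for i
  proof -
    have inX: "L!i \<in> X" "L!Suc i \<in> X" using L(1) i nth_mem[of i L] nth_mem[of "Suc i" L]
      by (auto simp: m_def)
    have c: "L!i < L!Suc i \<or> L!Suc i < L!i" using L(2) i by (auto simp: adj_nth cmpr_def m_def)
    then show ?thesis
    proof
      assume lt: "L!i < L!Suc i"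
      then have b: "(L!i, L!Suc i) \<in> basis X" using inX by (simp add: basis_def)
      show ?thesis using lt s_char[OF b z] t_char[OF b z] by (auto simp: wt_def phi_def)
    next
      assume lt: "L!Suc i < L!i"
      then have b: "(L!Suc i, L!i) \<in> basis X" using inX by (simp add: basis_def)
      show ?thesis using lt s_char[OF b z] t_char[OF b z] by (auto simp: wt_def phi_def)
    qed
  qed
  have "int (s_plus X \<theta> L z) - int (s_minus X \<theta> L z) - (int (t_plus X \<theta> L z) - int (t_minus X \<theta> L z))
      = (\<Sum>i<m. wt z (L!i) (L!Suc i))"
    unfolding s_plus_def s_minus_def t_plus_def t_minus_def cardI sum_subtractf[symmetric]
    by (intro sum.cong refl) (use step in auto)
  then show ?thesis unfolding balanced_at_def wsum_nth m_def by linarith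
qed


lemma mcl_sorted: "max_chain_list X vs \<Longrightarrow> sorted_wrt (<) vs"
  by (simp add: max_chain_list_def)

lemma mcl_sub: "max_chain_list X vs \<Longrightarrow> set vs \<subseteq> X"
  by (simp add: max_chain_list_def maximal_chain_def is_chain_def)

lemma mcl_max: "max_chain_list X vs \<Longrightarrow> is_chain X D \<Longrightarrow> set vs \<subseteq> D \<Longrightarrow> D = set vs"
  by (simp add: max_chain_list_def maximal_chain_def)

lemma basis_pair:
  assumes "max_chain_list X vs" "i < j" "j < length vs"
  shows "(vs!i, vs!j) \<in> basis X"
proof -
  have "vs!i < vs!j" using sorted_wrt_nth_less[OF mcl_sorted[OF assms(1)] assms(2,3)] .
  moreover have "vs!i \<in> X" "vs!j \<in> X" using mcl_sub[OF assms(1)] assms(2,3) by auto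
  ultimately show ?thesis by (simp add: basis_def)
qed

lemma max_chain_exists:
  assumes "is_chain X C"
  shows "\<exists>vs. max_chain_list X vs \<and> C \<subseteq> set vs"
proof -
  let ?S = "{D. is_chain X D \<and> C \<subseteq> D}"
  have "?S \<subseteq> Pow X" by (auto simp: is_chain_def)
  then have fin: "finite ?S" using finX by (simp add: finite_subset)
  have ne: "?S \<noteq> {}" using assms by auto
  have "\<exists>m\<in>?S. \<forall>b\<in>?S. m \<le> b \<longrightarrow> m = b" by (rule finite_has_maximal[OF fin ne])
  then obtain D where D: "D \<in> ?S" and Dm0: "\<forall>b\<in>?S. D \<le> b \<longrightarrow> D = b" ..
  have Dm: "D = b" if "b \<in> ?S" "D \<le> b" for b using Dm0 that by blast
  have Dc: "is_chain X D" "C \<subseteq> D" using D by auto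
  have mc: "maximal_chain X D" unfolding maximal_chain_def
  proof (intro conjI allI impI)
    show "is_chain X D" using Dc(1) .
    fix E assume "is_chain X E \<and> D \<subseteq> E"
    then show "E = D" using Dm[of E] Dc(2) by auto
  qed
  have "D \<subseteq> X" using Dc(1) by (simp add: is_chain_def)
  then have "finite D" using finX by (simp add: finite_subset)
  moreover have "\<forall>x\<in>D. \<forall>y\<in>D. x \<le> y \<or> y \<le> x" using Dc(1) by (simp add: is_chain_def)
  ultimately obtain vs where vs: "sorted_wrt (<) vs" "set vs = D"
    using chain_list_exists[of D] by blast
  then show ?thesis using mc Dc(2) by (auto simp: max_chain_list_def)
qed

lemma max_chain_covers:
  assumes mc: "max_chain_list X vs" and k: "Suc k < length vs"
  shows "covers X (vs!k) (vs!Suc k)"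
proof -
  have s: "sorted_wrt (<) vs" using mcl_sorted[OF mc] .
  have lt: "vs!k < vs!Suc k" using sorted_wrt_nth_less[OF s, of k "Suc k"] k by simp
  have inX: "vs!k \<in> X" "vs!Suc k \<in> X" using mcl_sub[OF mc] k by auto
  have "\<not> (\<exists>u\<in>X. vs!k < u \<and> u < vs!Suc k)"
  proof
    assume "\<exists>u\<in>X. vs!k < u \<and> u < vs!Suc k"
    then obtain u where u: "u \<in> X" "vs!k < u" "u < vs!Suc k" by blast
    have cmp: "vs!j < u \<or> u < vs!j" if j: "j < length vs" for j
    proof (cases "j \<le> k")
      case True
      then have "vs!j \<le> vs!k" using sorted_mono[OF s True] k by simp
      then show ?thesis using u by (meson order_le_less_trans)
    next
      case False
      then have "vs!Suc k \<le> vs!j" using sorted_mono[OF s, of "Suc k" j] j by simp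
      then show ?thesis using u by (meson order_less_le_trans)
    qed
    have ch: "is_chain X (insert u (set vs))"
    proof -
      have "is_chain X (set vs)" using mc by (simp add: max_chain_list_def maximal_chain_def)
      then show ?thesis using u(1) cmp unfolding is_chain_def
        by (auto simp: in_set_conv_nth) (metis less_imp_le)+
    qed
    have "insert u (set vs) = set vs" using mcl_max[OF mc ch] by auto
    then have "u \<in> set vs" by auto
    then obtain j where "j < length vs" "vs!j = u" by (auto simp: in_set_conv_nth)
    then show False using cmp by auto
  qed
  then show ?thesis using lt inX by (simp add: covers_def)
qed

definition incm where "incm us vs \<longleftrightarrow> (\<forall>i j. i < j \<and> j < length us \<longrightarrow> \<theta> (us!i, us!j) = (vs!i, vs!j))"
definition decm where "decm us vs \<longleftrightarrow> (\<forall>i j. i < j \<and> j < length us \<longrightarrow>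
   \<theta> (us!i, us!j) = (vs ! (length us - 1 - j), vs ! (length us - 1 - i)))"
definition pairs :: "'a list \<Rightarrow> ('a \<times> 'a) set" where
  "pairs vs = {(vs!i, vs!j) | i j. i < j \<and> j < length vs}"
definition MC where "MC = {vs. max_chain_list X vs \<and> 2 \<le> length vs}"
definition F where "F us = (SOME vs. max_chain_list X vs \<and> length vs = length us \<and> (incm us vs \<or> decm us vs))"

lemma F_prop:
  assumes "max_chain_list X us"
  shows "max_chain_list X (F us) \<and> length (F us) = length us \<and> (incm us (F us) \<or> decm us (F us))"
proof -
  have "increasing_on X \<theta> us \<or> decreasing_on X \<theta> us" using thM assms by (simp add: M_set_def)
  then have "\<exists>vs. max_chain_list X vs \<and> length vs = length us \<and> (incm us vs \<or> decm us vs)"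
    unfolding increasing_on_def decreasing_on_def incm_def decm_def by blast
  then show ?thesis unfolding F_def by (rule someI_ex)
qed

lemma pairs_basis: "max_chain_list X vs \<Longrightarrow> pairs vs \<subseteq> basis X"
  using basis_pair by (auto simp: pairs_def)

lemma pairs_img:
  assumes us: "max_chain_list X us"
  shows "\<theta> ` pairs us = pairs (F us)"
proof -
  let ?n = "length us"
  have len: "length (F us) = ?n" using F_prop[OF us] by simp
  from F_prop[OF us] have "incm us (F us) \<or> decm us (F us)" by simp
  then show ?thesis
  proof
    assume inc: "incm us (F us)"
    show ?thesis
    proof
      show "\<theta> ` pairs us \<subseteq> pairs (F us)"
      proof
        fix p assume "p \<in> \<theta> ` pairs us"
        then obtain i j where ij: "i < j" "j < ?n" "p = \<theta> (us!i, us!j)" by (auto simp: pairs_def)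
        then have "p = (F us!i, F us!j)" using inc by (simp add: incm_def)
        then show "p \<in> pairs (F us)" using ij len unfolding pairs_def by auto
      qed
      show "pairs (F us) \<subseteq> \<theta> ` pairs us"
      proof
        fix p assume "p \<in> pairs (F us)"
        then obtain i j where ij: "i < j" "j < ?n" "p = (F us!i, F us!j)" using len by (auto simp: pairs_def)
        then have "p = \<theta> (us!i, us!j)" using inc by (simp add: incm_def)
        moreover have "(us!i, us!j) \<in> pairs us" using ij by (auto simp: pairs_def)
        ultimately show "p \<in> \<theta> ` pairs us" by blast
      qed
    qed
  next
    assume dec: "decm us (F us)"
    show ?thesis
    proof
      show "\<theta> ` pairs us \<subseteq> pairs (F us)"
      proof
        fix p assume "p \<in> \<theta> ` pairs us"
        then obtain i j where ij: "i < j" "j < ?n" "p = \<theta> (us!i, us!j)" by (auto simp: pairs_def)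
        then have "p = (F us ! (?n - 1 - j), F us ! (?n - 1 - i))" using dec by (simp add: decm_def)
        moreover have "?n - 1 - j < ?n - 1 - i" "?n - 1 - i < length (F us)" using ij len by auto
        ultimately show "p \<in> pairs (F us)" unfolding pairs_def by blast
      qed
      show "pairs (F us) \<subseteq> \<theta> ` pairs us"
      proof
        fix p assume "p \<in> pairs (F us)"
        then obtain i j where ij: "i < j" "j < ?n" "p = (F us!i, F us!j)" using len by (auto simp: pairs_def)
        define i' where "i' = ?n - 1 - j"
        define j' where "j' = ?n - 1 - i"
        have ij': "i' < j'" "j' < ?n" "?n - 1 - j' = i" "?n - 1 - i' = j" using ij by (auto simp: i'_def j'_def)
        then have "\<theta> (us!i', us!j') = p" using dec ij by (simp add: decm_def)
        moreover have "(us!i', us!j') \<in> pairs us" using ij' by (auto simp: pairs_def)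
        ultimately show "p \<in> \<theta> ` pairs us" by blast
      qed
    qed
  qed
qed

lemma set_pairs:
  assumes "2 \<le> length vs"
  shows "set vs = fst ` pairs vs \<union> snd ` pairs vs"
proof
  show "set vs \<subseteq> fst ` pairs vs \<union> snd ` pairs vs"
  proof
    fix x assume "x \<in> set vs"
    then obtain k where k: "k < length vs" "vs!k = x" by (auto simp: in_set_conv_nth)
    show "x \<in> fst ` pairs vs \<union> snd ` pairs vs"
    proof (cases k)
      case 0
      then have "(vs!0, vs!1) \<in> pairs vs" using assms unfolding pairs_def by force
      then show ?thesis using k 0 by force
    next
      case (Suc k')
      then have "(vs!0, vs!k) \<in> pairs vs" using k unfolding pairs_def by force
      then show ?thesis using k by force
    qed
  qed
  show "fst ` pairs vs \<union> snd ` pairs vs \<subseteq> set vs" by (auto simp: pairs_def)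
qed

lemma sorted_distinct: "sorted_wrt (<) (vs :: 'a list) \<Longrightarrow> distinct vs"
  by (induction vs) auto

lemma finite_MC: "finite MC"
proof -
  have "MC \<subseteq> {xs. set xs \<subseteq> X \<and> length xs \<le> card X}"
  proof
    fix vs assume "vs \<in> MC"
    then have mc: "max_chain_list X vs" by (simp add: MC_def)
    have "length vs = card (set vs)" using distinct_card[OF sorted_distinct[OF mcl_sorted[OF mc]]] by simp
    also have "\<dots> \<le> card X" using card_mono[OF finX mcl_sub[OF mc]] .
    finally show "vs \<in> {xs. set xs \<subseteq> X \<and> length xs \<le> card X}" using mcl_sub[OF mc] by simp
  qed
  then show ?thesis using finite_lists_length_le[OF finX] finite_subset by blast
qed

lemma F_surj:
  assumes "vs \<in> MC"
  shows "\<exists>us\<in>MC. F us = vs"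
proof -
  have sub: "F ` MC \<subseteq> MC" using F_prop by (auto simp: MC_def)
  have inj: "inj_on F MC"
  proof
    fix us us' assume u: "us \<in> MC" "us' \<in> MC" and eq: "F us = F us'"
    have mc: "max_chain_list X us" "max_chain_list X us'" using u by (auto simp: MC_def)
    have "\<theta> ` pairs us = \<theta> ` pairs us'" using pairs_img[OF mc(1)] pairs_img[OF mc(2)] eq by simp
    then have "pairs us = pairs us'"
      using inj_on_image_eq_iff[OF injb pairs_basis[OF mc(1)] pairs_basis[OF mc(2)]] by simp
    then have "set us = set us'" using set_pairs u by (auto simp: MC_def)
    then show "us = us'" using sorted_set_unique mcl_sorted mc by blast
  qed
  have "F ` MC = MC" using endo_inj_surj[OF finite_MC sub inj] .
  then have "vs \<in> F ` MC" using assms by simp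
  then obtain us where "us \<in> MC" "vs = F us" by (rule imageE)
  then show ?thesis by blast
qed

lemma phi_chain:
  assumes vs: "max_chain_list X vs"
  shows "\<exists>g. \<forall>i j. i < j \<longrightarrow> j < length vs \<longrightarrow> phi z (vs!i, vs!j) = g i - g j"
proof (cases "2 \<le> length vs")
  case False
  then show ?thesis by auto
next
  case True
  then obtain us where us: "us \<in> MC" "F us = vs" using F_surj[of vs] vs by (auto simp: MC_def)
  have mu: "max_chain_list X us" using us by (simp add: MC_def)
  let ?n = "length vs"
  have len: "length us = ?n" using F_prop[OF mu] us by simp
  from F_prop[OF mu] us have "incm us vs \<or> decm us vs" by simp
  then show ?thesis
  proof
    assume inc: "incm us vs"
    show ?thesis
    proof (intro exI allI impI)
      fix i j assume ij: "i < j" "j < ?n"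
      have "tinv (vs!i, vs!j) = (us!i, us!j)"
        using tinv_eq[OF basis_pair[OF mu ij(1)]] inc ij len by (simp add: incm_def)
      then show "phi z (vs!i, vs!j) = (\<lambda>k. if us!k = z then 1 else 0) i - (\<lambda>k. if us!k = z then 1 else 0) j"
        by (simp add: phi_def)
    qed
  next
    assume dec: "decm us vs"
    show ?thesis
    proof (intro exI allI impI)
      fix i j assume ij: "i < j" "j < ?n"
      define i' where "i' = ?n - 1 - j"
      define j' where "j' = ?n - 1 - i"
      have ij': "i' < j'" "j' < ?n" "?n - 1 - j' = i" "?n - 1 - i' = j" using ij by (auto simp: i'_def j'_def)
      have "\<theta> (us!i', us!j') = (vs!i, vs!j)" using dec ij' len by (simp add: decm_def)
      then have "tinv (vs!i, vs!j) = (us!i', us!j')"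
        using tinv_eq[OF basis_pair[OF mu ij'(1)]] ij' len by simp
      then show "phi z (vs!i, vs!j) = (\<lambda>k. - (if us!(?n - 1 - k) = z then 1 else 0)) i
          - (\<lambda>k. - (if us!(?n - 1 - k) = z then 1 else 0)) j"
        by (simp add: phi_def i'_def j'_def)
    qed
  qed
qed


lemma chain_idx:
  assumes mc: "max_chain_list X vs" and a: "a \<in> set vs"
  obtains i where "i < length vs" "vs!i = a"
  using a by (auto simp: in_set_conv_nth)

lemma phi_trans:
  assumes X: "a \<in> X" "b \<in> X" "c \<in> X" and ab: "a < b" and bc: "b < c"
  shows "phi z (a,c) = phi z (a,b) + phi z (b,c)"
proof -
  have "is_chain X {a,b,c}" using X ab bc unfolding is_chain_def
    by (auto intro: less_imp_le order_less_trans)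
  then obtain vs where mc: "max_chain_list X vs" and sub: "{a,b,c} \<subseteq> set vs"
    using max_chain_exists by blast
  have s: "sorted_wrt (<) vs" using mcl_sorted[OF mc] .
  obtain ia where ia: "ia < length vs" "vs!ia = a" using sub by (auto simp: in_set_conv_nth)
  obtain ib where ib: "ib < length vs" "vs!ib = b" using sub by (auto simp: in_set_conv_nth)
  obtain ic where ic: "ic < length vs" "vs!ic = c" using sub by (auto simp: in_set_conv_nth)
  have o1: "ia < ib" using sorted_idx[OF s ia(1) ib(1)] ia ib ab by simp
  have o2: "ib < ic" using sorted_idx[OF s ib(1) ic(1)] ib ic bc by simp
  obtain g where g: "\<And>i j. i < j \<Longrightarrow> j < length vs \<Longrightarrow> phi z (vs!i, vs!j) = g i - g j"
    using phi_chain[OF mc, of z] by blast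
  show ?thesis using g[of ia ic] g[of ia ib] g[of ib ic] o1 o2 ia ib ic by simp
qed

lemma wt_trans:
  assumes X: "a \<in> X" "b \<in> X" "c \<in> X" and o: "(a < b \<and> b < c) \<or> (c < b \<and> b < a)"
  shows "wt z a c = wt z a b + wt z b c"
  using o
proof
  assume h: "a < b \<and> b < c"
  then have "a < c" by auto
  then show ?thesis using h phi_trans[OF X, of z] by (auto simp: wt_def)
next
  assume h: "c < b \<and> b < a"
  then have "c < a" by auto
  then show ?thesis using h phi_trans[OF X(3,2,1), of z] by (auto simp: wt_def)
qed

lemma path_up:
  assumes X: "a \<in> X" "b \<in> X" and ab: "a < b"
  shows "\<exists>P. P \<noteq> [] \<and> set P \<subseteq> X \<and> adj (covr X) P \<and> hd P = a \<and> last P = b \<and> wsum (wt z) P = wt z a b"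
proof -
  have "is_chain X {a,b}" using X ab unfolding is_chain_def by (auto intro: less_imp_le)
  then obtain vs where mc: "max_chain_list X vs" and sub: "{a,b} \<subseteq> set vs"
    using max_chain_exists by blast
  have s: "sorted_wrt (<) vs" using mcl_sorted[OF mc] .
  obtain ia where ia: "ia < length vs" "vs!ia = a" using sub by (auto simp: in_set_conv_nth)
  obtain ib where ib: "ib < length vs" "vs!ib = b" using sub by (auto simp: in_set_conv_nth)
  have o1: "ia < ib" using sorted_idx[OF s ia(1) ib(1)] ia ib ab by simp
  obtain g where g: "\<And>i j. i < j \<Longrightarrow> j < length vs \<Longrightarrow> phi z (vs!i, vs!j) = g i - g j"
    using phi_chain[OF mc, of z] by blast
  have claim: "ia + d < length vs \<Longrightarrow> adj (covr X) (map (\<lambda>k. vs!(ia+k)) [0..<Suc d])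
      \<and> wsum (wt z) (map (\<lambda>k. vs!(ia+k)) [0..<Suc d]) = g ia - g (ia + d)" for d
  proof (induction d)
    case 0
    then show ?case by simp
  next
    case (Suc d)
    let ?P = "map (\<lambda>k. vs!(ia+k)) [0..<Suc d]"
    have eq: "map (\<lambda>k. vs!(ia+k)) [0..<Suc (Suc d)] = ?P @ [vs!(ia + Suc d)]" by simp
    have ne: "?P \<noteq> []" by simp
    have lst: "last ?P = vs!(ia+d)" by simp
    have cov: "covers X (vs!(ia+d)) (vs!Suc (ia+d))" using max_chain_covers[OF mc, of "ia+d"] Suc.prems by simp
    have lt: "vs!(ia+d) < vs!(ia + Suc d)" using sorted_wrt_nth_less[OF s, of "ia+d" "ia+Suc d"] Suc.prems by simp
    have w: "wt z (vs!(ia+d)) (vs!(ia + Suc d)) = g (ia+d) - g (ia + Suc d)"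
      using lt g[of "ia+d" "ia+Suc d"] Suc.prems by (simp add: wt_def)
    have cov': "covr X (vs!(ia+d)) (vs!(ia+Suc d))" using cov by (simp add: covr_def)
    have IH: "adj (covr X) ?P" "wsum (wt z) ?P = g ia - g (ia + d)" using Suc.IH Suc.prems by simp_all
    show ?case unfolding eq adj_snoc[OF ne] wsum_snoc[OF ne] lst
      using IH cov' w by simp
  qed
  define P where "P = map (\<lambda>k. vs!(ia+k)) [0..<Suc (ib - ia)]"
  have c: "adj (covr X) P \<and> wsum (wt z) P = g ia - g ib" using claim[of "ib - ia"] o1 ib unfolding P_def by simp
  have "set P \<subseteq> set vs" unfolding P_def using o1 ib by auto
  then have "set P \<subseteq> X" using mcl_sub[OF mc] by auto
  moreover have "hd P = a" "last P = b" "P \<noteq> []" unfolding P_def using ia ib o1 by (simp_all add: hd_map last_map)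
  moreover have "wt z a b = g ia - g ib" using g[OF o1 ib(1)] ia ib ab by (simp add: wt_def)
  ultimately show ?thesis using c by metis
qed

lemma path:
  assumes X: "a \<in> X" "b \<in> X" and ab: "cmpr a b"
  shows "\<exists>P. P \<noteq> [] \<and> set P \<subseteq> X \<and> adj (covr X) P \<and> hd P = a \<and> last P = b \<and> wsum (wt z) P = wt z a b"
proof (cases "a < b")
  case True
  then show ?thesis using path_up[OF X True] by blast
next
  case False
  then have ba: "b < a" using ab by (simp add: cmpr_def)
  obtain P where P: "P \<noteq> []" "set P \<subseteq> X" "adj (covr X) P" "hd P = b" "last P = a" "wsum (wt z) P = wt z b a"
    using path_up[OF X(2,1) ba, of z] by blast
  have sym: "(\<lambda>x y. covr X y x) = covr X" by (auto simp: covr_def fun_eq_iff)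
  have "adj (covr X) (rev P)" using P(3) adj_rev[of "covr X" P] sym by simp
  moreover have "wsum (wt z) (rev P) = wt z a b" using wsum_rev[of "wt z" P, OF wt_anti] P(6) wt_anti[of z a b] by simp
  moreover have "hd (rev P) = a" "last (rev P) = b" using P by (simp_all add: hd_rev last_rev)
  moreover have "rev P \<noteq> []" "set (rev P) \<subseteq> X" using P by simp_all
  ultimately show ?thesis by blast
qed

lemma to_walk:
  "L \<noteq> [] \<Longrightarrow> set L \<subseteq> X \<Longrightarrow> adj cmpr L \<Longrightarrow> \<exists>W. W \<noteq> [] \<and> set W \<subseteq> X \<and> adj (covr X) W
     \<and> hd W = hd L \<and> last W = last L \<and> wsum (wt z) W = wsum (wt z) L"
proof (induction L rule: induct_list012)
  case (2 a)
  then show ?case by (intro exI[of _ "[a]"]) simp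
next
  case (3 a b r)
  have ex: "\<exists>W. W \<noteq> [] \<and> set W \<subseteq> X \<and> adj (covr X) W
     \<and> hd W = hd (b#r) \<and> last W = last (b#r) \<and> wsum (wt z) W = wsum (wt z) (b#r)"
    by (rule "3.IH") (use "3.prems" in simp_all)
  obtain W' where W': "W' \<noteq> []" "set W' \<subseteq> X" "adj (covr X) W'" "hd W' = b" "last W' = last (b#r)"
      "wsum (wt z) W' = wsum (wt z) (b#r)"
    using ex by auto
  have abX: "a \<in> X" "b \<in> X" and cab: "cmpr a b" using "3.prems" by auto
  obtain P where P: "P \<noteq> []" "set P \<subseteq> X" "adj (covr X) P" "hd P = a" "last P = b" "wsum (wt z) P = wt z a b"
    using path[OF abX cab, of z] by blast
  obtain Q c where Pd0: "P = Q @ [c]" using P(1) by (cases P rule: rev_cases) auto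
  then have "c = b" using P(5) by simp
  then have Pd: "P = Q @ [b]" using Pd0 by simp
  have bne: "Q \<noteq> []"
  proof
    assume "Q = []"
    then have "a = b" using P(4) Pd by simp
    then show False using cab by (simp add: cmpr_def)
  qed
  obtain T where Wd: "W' = b # T" using W'(1,4) by (cases W') auto
  define W where "W = Q @ b # T"
  have "adj (covr X) W" unfolding W_def adj_append[of _ Q b T] using P(3) W'(3) unfolding Pd Wd by simp
  moreover have "wsum (wt z) W = wsum (wt z) (a # b # r)" unfolding W_def wsum_append[of _ Q b T]
    using P(6) W'(6) unfolding Pd Wd by simp
  moreover have "hd W = a" unfolding W_def using bne P(4) unfolding Pd by simp
  moreover have "last W = last (a#b#r)" unfolding W_def using W'(5) unfolding Wd by simp
  moreover have "set W \<subseteq> X" unfolding W_def using P(2) W'(2) unfolding Pd Wd by auto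
  moreover have "W \<noteq> []" unfolding W_def by simp
  ultimately show ?case by (intro exI[of _ W]) simp
qed simp


lemma adj_mono: "(\<And>a b. R a b \<Longrightarrow> R' a b) \<Longrightarrow> adj R L \<Longrightarrow> adj R' L"
  by (induction L rule: induct_list012) auto

lemma concat_pairs:
  "concat (map (\<lambda>i. [f i, g i]) [0..<n]) = map (\<lambda>k. if even k then f (k div 2) else g (k div 2)) [0..<2*n]"
  by (induction n) auto

lemma crown_list_eq:
  "crown_list xs ys = map (\<lambda>k. if even k then xs!(k div 2) else ys!(k div 2)) [0..<2*length xs] @ [xs!0]"
  unfolding crown_list_def concat_pairs by simp

lemma crown_nth1: "k < 2 * length xs \<Longrightarrow> crown_list xs ys ! k = (if even k then xs!(k div 2) else ys!(k div 2))"
  unfolding crown_list_eq by (simp add: nth_append)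

lemma crown_nth2: "crown_list xs ys ! (2 * length xs) = xs!0"
  unfolding crown_list_eq by (simp add: nth_append)

lemma crown_len: "length (crown_list xs ys) = Suc (2 * length xs)"
  unfolding crown_list_eq by simp

lemma crown_semi:
  assumes wc: "weak_crown X xs ys"
  shows "crown_list xs ys \<noteq> [] \<and> set (crown_list xs ys) \<subseteq> X \<and> adj cmpr (crown_list xs ys)
    \<and> hd (crown_list xs ys) = last (crown_list xs ys)"
proof -
  let ?L = "crown_list xs ys"
  let ?n = "length xs"
  have n: "length ys = ?n" "2 \<le> ?n" "set xs \<subseteq> X" "set ys \<subseteq> X" using wc by (auto simp: weak_crown_def)
  have o1: "\<And>i. i < ?n \<Longrightarrow> xs!i < ys!i" and o2: "\<And>i. Suc i < ?n \<Longrightarrow> xs!Suc i < ys!i"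
    and o3: "xs!0 < ys!(?n - 1)" using wc by (auto simp: weak_crown_def)
  have ne: "?L \<noteq> []" unfolding crown_list_def by simp
  have "set ?L \<subseteq> X"
  proof
    fix x assume "x \<in> set ?L"
    then obtain k where k: "k < length ?L" "?L!k = x" by (auto simp: in_set_conv_nth)
    show "x \<in> X"
    proof (cases "k < 2 * ?n")
      case True
      then have "k div 2 < ?n" by simp
      then have "xs!(k div 2) \<in> X" "ys!(k div 2) \<in> X" using n nth_mem[of "k div 2" xs] nth_mem[of "k div 2" ys]
        by auto
      then show ?thesis using k(2) crown_nth1[OF True, of ys] by (cases "even k") auto
    next
      case False
      then have "k = 2 * ?n" using k crown_len[of xs ys] by simp
      have "0 < length xs" using n(2) by linarith
      then have "xs!0 \<in> set xs" by (rule nth_mem)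
      then have "xs!0 \<in> X" using n(3) by blast
      moreover note \<open>k = 2 * ?n\<close>
      ultimately show ?thesis using k crown_nth2[of xs ys] by auto
    qed
  qed
  moreover have "adj cmpr ?L" unfolding adj_nth
  proof (intro allI impI)
    fix k assume k: "Suc k < length ?L"
    then have k2: "k < 2 * ?n" using crown_len[of xs ys] by simp
    show "cmpr (?L!k) (?L!Suc k)"
    proof (cases "even k")
      case True
      then have "Suc k < 2 * ?n" using k2 by presburger
      moreover have "Suc k div 2 = k div 2" "\<not> even (Suc k)" using True by auto
      ultimately have "?L!Suc k = ys!(k div 2)" using crown_nth1[of "Suc k" xs ys] by simp
      moreover have "?L!k = xs!(k div 2)" using crown_nth1[OF k2, of ys] True by simp
      moreover have "k div 2 < ?n" using k2 by simp
      ultimately show ?thesis using o1 by (simp add: cmpr_def)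
    next
      case False
      have Lk: "?L!k = ys!(k div 2)" using crown_nth1[OF k2, of ys] False by simp
      show ?thesis
      proof (cases "Suc k < 2 * ?n")
        case True
        moreover have "Suc k div 2 = Suc (k div 2)" "even (Suc k)" using False by presburger+
        ultimately have "?L!Suc k = xs!Suc (k div 2)" using crown_nth1[of "Suc k" xs ys] by simp
        moreover have "Suc (k div 2) < ?n" using True False by presburger
        ultimately show ?thesis using o2 Lk by (simp add: cmpr_def)
      next
        case False2: False
        then have "Suc k = 2 * ?n" using k2 by simp
        then have "?L!Suc k = xs!0" "k div 2 = ?n - 1" using crown_nth2[of xs ys] by auto
        then show ?thesis using o3 Lk by (simp add: cmpr_def)
      qed
    qed
  qed
  moreover have "hd ?L = last ?L"
  proof -
    have p: "0 < 2 * ?n" using n(2) by linarith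
    have "hd ?L = ?L!0" using hd_conv_nth[OF ne] .
    also have "\<dots> = xs!0" using crown_nth1[OF p, of ys] by simp
    also have "\<dots> = ?L!(length ?L - 1)" using crown_nth2[of xs ys] crown_len[of xs ys] by simp
    also have "\<dots> = last ?L" using last_conv_nth[OF ne] by simp
    finally show ?thesis .
  qed
  ultimately show ?thesis using ne by simp
qed

lemma dir1:
  assumes adm: "admissible X \<theta>" and wc: "weak_crown X xs ys" and z: "z \<in> X"
  shows "balanced_at X \<theta> (crown_list xs ys) z"
proof -
  let ?L = "crown_list xs ys"
  have L: "?L \<noteq> []" "set ?L \<subseteq> X" "adj cmpr ?L" "hd ?L = last ?L" using crown_semi[OF wc] by auto
  obtain W where W: "W \<noteq> []" "set W \<subseteq> X" "adj (covr X) W" "hd W = hd ?L" "last W = last ?L"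
    "wsum (wt z) W = wsum (wt z) ?L" using to_walk[OF L(1-3), of z] by blast
  have Wc: "adj cmpr W" using adj_mono[OF _ W(3), of cmpr] by (auto simp: covr_def covers_def cmpr_def)
  have "walk X W" using W Wc by (simp add: walk_iff)
  moreover have "closed_walk W" using W L by (simp add: closed_walk_def)
  ultimately have "balanced_at X \<theta> W z" using adm z by (simp add: admissible_def)
  then have "wsum (wt z) W = 0" using balanced_iff[OF W(2) Wc z] by simp
  then show ?thesis using balanced_iff[OF L(2,3) z] W(6) by simp
qed


lemma merge_step:
  assumes L: "L = A @ a # b # c # C" and o: "(a < b \<and> b < c) \<or> (c < b \<and> b < a)"
    and X: "set L \<subseteq> X" and ad: "adj cmpr L"
  shows "wsum (wt z) (A @ a # c # C) = wsum (wt z) L \<and> adj cmpr (A @ a # c # C)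
    \<and> set (A @ a # c # C) \<subseteq> X \<and> length (A @ a # c # C) < length L
    \<and> hd (A @ a # c # C) = hd L \<and> last (A @ a # c # C) = last L"
proof -
  have abc: "a \<in> X" "b \<in> X" "c \<in> X" using X L by auto
  have w: "wt z a c = wt z a b + wt z b c" using wt_trans[OF abc o] .
  have e1: "wsum (wt z) L = wsum (wt z) (A @ [a]) + wsum (wt z) (a # b # c # C)"
    unfolding L by (rule wsum_append)
  have e2: "wsum (wt z) (A @ a # c # C) = wsum (wt z) (A @ [a]) + wsum (wt z) (a # c # C)"
    by (rule wsum_append)
  have "cmpr a c" using o by (auto simp: cmpr_def)
  have a1: "adj cmpr L = (adj cmpr (A @ [a]) \<and> adj cmpr (a # b # c # C))"
    unfolding L by (rule adj_append)
  have a2: "adj cmpr (A @ a # c # C) = (adj cmpr (A @ [a]) \<and> adj cmpr (a # c # C))"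
    by (rule adj_append)
  have "adj cmpr (A @ a # c # C)" using a1 a2 ad \<open>cmpr a c\<close> by simp
  moreover have "wsum (wt z) (A @ a # c # C) = wsum (wt z) L" using e1 e2 w by simp
  moreover have "set (A @ a # c # C) \<subseteq> X" using X L by auto
  moreover have "hd (A @ a # c # C) = hd L" unfolding L by (cases A) auto
  moreover have "last (A @ a # c # C) = last L" unfolding L by (cases C) auto
  moreover have "length (A @ a # c # C) < length L" unfolding L by simp
  ultimately show ?thesis by blast
qed

lemma split_sum:
  "wsum f (A @ v # B @ v # C) = wsum f (A @ v # C) + wsum f (v # B @ [v])"
proof -
  have e1: "wsum f (A @ v # (B @ v # C)) = wsum f (A @ [v]) + wsum f (v # B @ v # C)" by (rule wsum_append)
  have e2: "wsum f ((v # B) @ v # C) = wsum f ((v # B) @ [v]) + wsum f (v # C)" by (rule wsum_append)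
  have e3: "wsum f (A @ v # C) = wsum f (A @ [v]) + wsum f (v # C)" by (rule wsum_append)
  show ?thesis using e1 e2 e3 by simp
qed

lemma rot:
  assumes len: "2 \<le> length L" and cl: "hd L = last L"
  defines "L' \<equiv> tl L @ [L!1]"
  shows "length L' = length L" "\<And>i. i < length L - 1 \<Longrightarrow> L'!i = L!Suc i"
    "L'!(length L - 1) = L!1" "wsum f L' = wsum f L" "set L' \<subseteq> set L"
    "adj R L \<Longrightarrow> adj R L'" "hd L' = last L'" "distinct (butlast L) \<Longrightarrow> distinct (butlast L')"
    "L' \<noteq> []"
proof -
  obtain a r where L: "L = a # r" using len by (cases L) auto
  have rne: "r \<noteq> []" using len L by auto
  have la: "last r = a" using cl L rne by simp
  have h1: "L!1 = hd r" using L rne by (simp add: hd_conv_nth)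
  have L'd: "L' = r @ [hd r]" unfolding L'_def using L h1 by simp
  have rd: "r = hd r # tl r" using rne by simp
  show "length L' = length L" unfolding L'd L by simp
  show "L'!i = L!Suc i" if "i < length L - 1" for i using that unfolding L'd L by (simp add: nth_append)
  show "L'!(length L - 1) = L!1" unfolding L'd h1 L using rne by (simp add: nth_append hd_conv_nth)
  show "wsum f L' = wsum f L"
  proof -
    have "wsum f L' = wsum f r + f a (hd r)" unfolding L'd using wsum_snoc[OF rne, of f "hd r"] la by simp
    moreover have "wsum f L = f a (hd r) + wsum f r" unfolding L using rd by (metis wsum.simps(1))
    ultimately show ?thesis by simp
  qed
  show "set L' \<subseteq> set L" unfolding L'd L using rne by auto
  show "adj R L'" if "adj R L"
  proof -
    have "adj R L = (R a (hd r) \<and> adj R r)" unfolding L using rd by (metis adj.simps(1))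
    then show ?thesis unfolding L'd using adj_snoc[OF rne, of R "hd r"] la that by simp
  qed
  show "hd L' = last L'" unfolding L'd using rne by simp
  show "distinct (butlast L')" if "distinct (butlast L)"
  proof -
    have rb: "r = butlast r @ [a]" using append_butlast_last_id[OF rne] la by simp
    have "butlast L = a # butlast r" unfolding L using rne by simp
    then have "distinct (a # butlast r)" using that by simp
    then have "distinct (butlast r @ [a])" by simp
    then show ?thesis unfolding L'd using rb by simp
  qed
  show "L' \<noteq> []" unfolding L'd by simp
qed

lemma crown_zero:
  assumes H: "\<And>xs ys. weak_crown X xs ys \<Longrightarrow> wsum (wt z) (crown_list xs ys) = 0"
    and ne: "L \<noteq> []" and LX: "set L \<subseteq> X" and ad: "adj cmpr L" and cl: "hd L = last L"
    and dist: "distinct (butlast L)" and len: "length L = Suc m" and ev: "even m" and m4: "4 \<le> m"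
    and dir: "\<And>i. i < m \<Longrightarrow> (L!i < L!Suc i) \<longleftrightarrow> even i"
  shows "wsum (wt z) L = 0"
proof -
  obtain n where m: "m = 2 * n" using ev by (auto elim: evenE)
  have n2: "2 \<le> n" using m4 m by simp
  define xs where "xs = map (\<lambda>i. L!(2*i)) [0..<n]"
  define ys where "ys = map (\<lambda>i. L!(2*i+1)) [0..<n]"
  have lx: "length xs = n" "length ys = n" unfolding xs_def ys_def by simp_all
  have cmpi: "cmpr (L!i) (L!Suc i)" if "i < m" for i using ad that len by (simp add: adj_nth)
  have down: "L!Suc i < L!i" if "i < m" "odd i" for i using cmpi[OF that(1)] dir[OF that(1)] that(2)
    by (auto simp: cmpr_def)
  have up: "L!i < L!Suc i" if "i < m" "even i" for i using dir[OF that(1)] that(2) by simp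
  have Lm: "L!m = L!0" using cl hd_conv_nth[OF ne] last_conv_nth[OF ne] len by simp
  have inj: "i = j" if "i < m" "j < m" "L!i = L!j" for i j
  proof -
    have "length (butlast L) = m" using len by simp
    moreover have "butlast L ! i = L!i" "butlast L ! j = L!j" using that len by (simp_all add: nth_butlast)
    ultimately show ?thesis using dist that nth_eq_iff_index_eq[of "butlast L" i j] by simp
  qed
  have inX: "L!k \<in> X" if "k < Suc m" for k using LX that len nth_mem[of k L] by auto
  have cl_eq: "crown_list xs ys = L"
  proof (rule nth_equalityI)
    show "length (crown_list xs ys) = length L" using crown_len[of xs ys] lx len m by simp
    fix k assume k: "k < length (crown_list xs ys)"
    show "crown_list xs ys ! k = L!k"
    proof (cases "k < 2 * n")
      case True
      then have "k div 2 < n" by simp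
      then show ?thesis using crown_nth1[of k xs ys] True lx
        by (auto simp: xs_def ys_def)
    next
      case False
      then have "k = 2 * n" using k crown_len[of xs ys] lx by simp
      then show ?thesis using crown_nth2[of xs ys] lx n2 Lm m by (simp add: xs_def)
    qed
  qed
  have wc: "weak_crown X xs ys"
    unfolding weak_crown_def
  proof (intro conjI allI impI)
    show "length xs = length ys" "2 \<le> length xs" using lx n2 by simp_all
    show "set xs \<subseteq> X" "set ys \<subseteq> X" using inX m by (auto simp: xs_def ys_def)
    show "xs!i < ys!i" if "i < length xs" for i using up[of "2*i"] that lx m by (simp add: xs_def ys_def)
    show "xs!Suc i < ys!i" if "Suc i < length xs" for i using down[of "2*i+1"] that lx m
      by (simp add: xs_def ys_def)
    show "xs!0 < ys!(length xs - 1)"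
    proof -
      have e: "Suc (2 * (n - 1)) = m - 1" using n2 m by simp
      have "ys!(length xs - 1) = L!(Suc (2 * (n - 1)))" using lx n2 by (simp add: ys_def)
      then have "ys!(length xs - 1) = L!(m - 1)" using e by simp
      moreover have "xs!0 = L!m" using lx n2 Lm by (simp add: xs_def)
      moreover have "L!Suc (m-1) < L!(m-1)" using down[of "m-1"] m n2 by simp
      ultimately show ?thesis using m n2 by simp
    qed
    show "distinct (xs @ ys)"
    proof -
      have "distinct xs" unfolding distinct_conv_nth using lx
        by (auto simp: xs_def dest!: inj[rotated 2] simp: m)
      moreover have "distinct ys" unfolding distinct_conv_nth using lx
        by (auto simp: ys_def dest!: inj[rotated 2] simp: m)
      moreover have "set xs \<inter> set ys = {}"
      proof (rule ccontr)
        assume "set xs \<inter> set ys \<noteq> {}"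
        then obtain i j where "i < n" "j < n" "L!(2*i) = L!(2*j+1)" by (auto simp: xs_def ys_def)
        then have "2*i = 2*j+1" using inj[of "2*i" "2*j+1"] m by simp
        then show False by presburger
      qed
      ultimately show ?thesis by simp
    qed
  qed
  show ?thesis using H[OF wc] cl_eq by simp
qed


lemma decomp3:
  assumes "Suc (Suc i) < length L"
  shows "L = take i L @ L!i # L!Suc i # L!Suc (Suc i) # drop (Suc (Suc (Suc i))) L"
proof -
  have "drop i L = L!i # L!Suc i # L!Suc (Suc i) # drop (Suc (Suc (Suc i))) L"
    using assms by (simp add: Cons_nth_drop_Suc)
  moreover have "L = take i L @ drop i L" by simp
  ultimately show ?thesis by simp
qed

lemma cycle_zero:
  assumes H: "\<And>xs ys. weak_crown X xs ys \<Longrightarrow> wsum (wt z) (crown_list xs ys) = 0"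
  shows "L \<noteq> [] \<Longrightarrow> set L \<subseteq> X \<Longrightarrow> adj cmpr L \<Longrightarrow> hd L = last L \<Longrightarrow> wsum (wt z) L = 0"
proof (induction "length L" arbitrary: L rule: less_induct)
  case less
  have IH: "wsum (wt z) L' = 0" if "length L' < length L" "L' \<noteq> []" "set L' \<subseteq> X" "adj cmpr L'"
    "hd L' = last L'" for L'
    using less.hyps that by blast
  note P = less.prems
  define m where "m = length L - 1"
  have len: "length L = Suc m" using P(1) m_def by (cases L) auto
  have cmpi: "cmpr (L!i) (L!Suc i)" if "i < m" for i using P(3) that len by (simp add: adj_nth)
  have dn: "L!Suc i < L!i" if "i < m" "\<not> L!i < L!Suc i" for i using cmpi[OF that(1)] that(2)
    by (auto simp: cmpr_def)
  have Lm: "L!m = L!0" using P(4) hd_conv_nth[OF P(1)] last_conv_nth[OF P(1)] len by simp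
  show ?case
  proof (cases "\<exists>A a b c C. L = A @ a # b # c # C \<and> ((a < b \<and> b < c) \<or> (c < b \<and> b < a))")
    case True
    then obtain A a b c C where Ld: "L = A @ a # b # c # C" and o: "(a < b \<and> b < c) \<or> (c < b \<and> b < a)"
      by blast
    note ms = merge_step[OF Ld o P(2) P(3), of z]
    have "wsum (wt z) (A @ a # c # C) = 0"
      by (rule IH) (use ms P in auto)
    then show ?thesis using ms by simp
  next
    case noM: False
    have noalt: "\<not> ((L!i < L!Suc i \<and> L!Suc i < L!Suc (Suc i)) \<or> (L!Suc (Suc i) < L!Suc i \<and> L!Suc i < L!i))"
      if "i + 2 \<le> m" for i
    proof -
      have "Suc (Suc i) < length L" using that len by simp
      from decomp3[OF this] show ?thesis using noM by blast
    qed
    show ?thesis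
    proof (cases "distinct (butlast L)")
      case False
      obtain xs ys zs y where bd: "butlast L = xs @ [y] @ ys @ [y] @ zs"
        using not_distinct_decomp[OF False] by blast
      define C where "C = zs @ [last L]"
      have e1: "butlast L @ [last L] = L" by (rule append_butlast_last_id[OF P(1)])
      have e2: "butlast L @ [last L] = xs @ y # ys @ y # C" unfolding bd C_def by simp
      have Ld: "L = xs @ y # ys @ y # C" using e1 e2 by simp
      have Cne: "C \<noteq> []" unfolding C_def by simp
      have sp: "wsum (wt z) L = wsum (wt z) (xs @ y # C) + wsum (wt z) (y # ys @ [y])"
        unfolding Ld by (rule split_sum)
      have a1: "adj cmpr (xs @ y # (ys @ y # C)) = (adj cmpr (xs @ [y]) \<and> adj cmpr (y # ys @ y # C))"
        by (rule adj_append)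
      have a2: "adj cmpr ((y # ys) @ y # C) = (adj cmpr ((y # ys) @ [y]) \<and> adj cmpr (y # C))"
        by (rule adj_append)
      have a3: "adj cmpr (xs @ y # C) = (adj cmpr (xs @ [y]) \<and> adj cmpr (y # C))"
        by (rule adj_append)
      have ad: "adj cmpr (xs @ y # (ys @ y # C))" using P(3) Ld by simp
      have o1: "wsum (wt z) (xs @ y # C) = 0"
      proof (rule IH)
        show "length (xs @ y # C) < length L" unfolding Ld by simp
        show "xs @ y # C \<noteq> []" by simp
        show "set (xs @ y # C) \<subseteq> X" using P(2) unfolding Ld by auto
        show "adj cmpr (xs @ y # C)" using a1 a2 a3 ad by simp
        show "hd (xs @ y # C) = last (xs @ y # C)" using P(4) Cne unfolding Ld by (cases xs) auto
      qed
      have o2: "wsum (wt z) (y # ys @ [y]) = 0"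
      proof (rule IH)
        show "length (y # ys @ [y]) < length L" unfolding Ld using Cne by simp
        show "y # ys @ [y] \<noteq> []" by simp
        show "set (y # ys @ [y]) \<subseteq> X" using P(2) unfolding Ld by auto
        show "adj cmpr (y # ys @ [y])" using a1 a2 ad by simp
        show "hd (y # ys @ [y]) = last (y # ys @ [y])" by simp
      qed
      show ?thesis using sp o1 o2 by simp
    next
      case dist: True
      show ?thesis
      proof (cases "m \<le> 2")
        case True
        then consider "m = 0" | "m = 1" | "m = 2" by linarith
        then show ?thesis
        proof cases
          case 1
          then obtain a where "L = [a]" using len by (cases L) auto
          then show ?thesis by simp
        next
          case 2
          then obtain a b where Lab: "L = [a,b]" using len by (auto simp: length_Suc_conv)
          then have "a = b" using P(4) by simp
          then show ?thesis using P(3) Lab by (simp add: cmpr_def)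
        next
          case 3
          then obtain a b c where Lab: "L = [a,b,c]" using len by (auto simp: length_Suc_conv numeral_2_eq_2)
          then have "c = a" using P(4) by simp
          then show ?thesis using Lab wt_anti[of z a b] by simp
        qed
      next
        case big: False
        have alt: "(L!Suc i < L!Suc (Suc i)) \<longleftrightarrow> \<not> (L!i < L!Suc i)" if "Suc i < m" for i
        proof -
          have "i + 2 \<le> m" using that by simp
          note na = noalt[OF this]
          have d1: "L!Suc i < L!i" if "\<not> L!i < L!Suc i" using dn[of i] that \<open>Suc i < m\<close> by simp
          have d2: "L!Suc (Suc i) < L!Suc i" if "\<not> L!Suc i < L!Suc (Suc i)" using dn[of "Suc i"] that \<open>Suc i < m\<close> by simp
          show ?thesis using na d1 d2 by (meson order.asym)
        qed
        have len2: "2 \<le> length L" using len big by simp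
        define L' where "L' = tl L @ [L!1]"
        note R = rot[OF len2 P(4), folded L'_def]
        have R2: "L'!i = L!Suc i" if "i < m" for i using R(2)[of i] that len by simp
        have R3: "L'!m = L!1" using R(3) len by simp
        have lenL': "length L' = Suc m" using R(1) len by simp
        show ?thesis
        proof (cases "(L!(m-1) < L!Suc (m-1)) \<longleftrightarrow> (L!0 < L!1)")
          case True
          have sm: "Suc (m - 1) = m" "Suc (m - 2) = m - 1" using big by auto
          have a: "L'!(m-2) = L!(m-1)" "L'!(m-1) = L!m" using R2[of "m-2"] R2[of "m-1"] big sm by auto
          have o: "(L'!(m-2) < L'!Suc (m-2) \<and> L'!Suc (m-2) < L'!Suc (Suc (m-2)))
              \<or> (L'!Suc (Suc (m-2)) < L'!Suc (m-2) \<and> L'!Suc (m-2) < L'!(m-2))"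
          proof (cases "L!0 < L!1")
            case True2: True
            then have "L!(m-1) < L!m" using True sm by simp
            then show ?thesis using a R3 sm True2 Lm by simp
          next
            case False2: False
            then have "L!1 < L!0" using dn[of 0] big by simp
            moreover have "L!m < L!(m-1)" using dn[of "m-1"] True False2 sm big by simp
            ultimately show ?thesis using a R3 sm Lm by simp
          qed
          have "Suc (Suc (m-2)) < length L'" using lenL' big by simp
          note Ld' = decomp3[OF this]
          note ms = merge_step[OF Ld' o _ R(6)[OF P(3)], of z]
          have sX: "set L' \<subseteq> X" using R(5) P(2) by blast
          have "wsum (wt z) (take (m-2) L' @ L'!(m-2) # L'!Suc (Suc (m-2)) # drop (Suc (Suc (Suc (m-2)))) L') = 0"
            by (rule IH) (use ms[OF sX] R(7) lenL' len in auto)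
          then show ?thesis using ms[OF sX] R(4)[of "wt z"] by simp
        next
          case False
          show ?thesis
          proof (cases "L!0 < L!1")
            case True
            have par: "i < m \<longrightarrow> ((L!i < L!Suc i) \<longleftrightarrow> even i)" for i
            proof (induction i)
              case 0 then show ?case using True by simp
            next
              case (Suc i) then show ?case using alt[of i] by auto
            qed
            have "\<not> (L!(m-1) < L!Suc (m-1))" using False True by simp
            then have "odd (m-1)" using par[of "m-1"] big by auto
            then have ev: "even m" using big by presburger
            then have m4: "4 \<le> m" using big by presburger
            show ?thesis by (rule crown_zero[OF H P(1-4) dist len ev m4]) (use par in auto)
          next
            case False0: False
            have par: "i < m \<longrightarrow> ((L!i < L!Suc i) \<longleftrightarrow> odd i)" for i
            proof (induction i)
              case 0 then show ?case using False0 by simp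
            next
              case (Suc i) then show ?case using alt[of i] by auto
            qed
            have "L!(m-1) < L!Suc (m-1)" using False False0 by simp
            then have "odd (m-1)" using par[of "m-1"] big by auto
            then have ev: "even m" using big by presburger
            then have m4: "4 \<le> m" using big by presburger
            have dir': "(L'!i < L'!Suc i) \<longleftrightarrow> even i" if "i < m" for i
            proof (cases "Suc i < m")
              case True
              then show ?thesis using R2[of i] R2[of "Suc i"] par[of "Suc i"] that by simp
            next
              case False
              then have "i = m - 1" "Suc i = m" using that by auto
              then show ?thesis using R2[of i] R3 Lm False0 that \<open>odd (m-1)\<close> by simp
            qed
            have sX: "set L' \<subseteq> X" using R(5) P(2) by blast
            have "wsum (wt z) L' = 0"
              using crown_zero[OF H R(9) sX R(6)[OF P(3)] R(7) R(8)[OF dist] lenL' ev m4 dir'] by simp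
            then show ?thesis using R(4)[of "wt z"] by simp
          qed
        qed
      qed
    qed
  qed
qed

end

theorem lemma4p2:
  fixes X :: "'a::order set" and \<theta> :: "'a \<times> 'a \<Rightarrow> 'a \<times> 'a"
  assumes "finite X" and "poset_connected X" and "\<theta> \<in> M_set X"
  shows "\<theta> \<in> AM_set X \<longleftrightarrow>
    (\<forall>xs ys z. weak_crown X xs ys \<and> z \<in> X \<longrightarrow> balanced_at X \<theta> (crown_list xs ys) z)"
proof -
  interpret ctx X \<theta> using assms(1,3) by unfold_locales
  show ?thesis
  proof
    assume "\<theta> \<in> AM_set X"
    then have adm: "admissible X \<theta>" by (simp add: AM_set_def)
    show "\<forall>xs ys z. weak_crown X xs ys \<and> z \<in> X \<longrightarrow> balanced_at X \<theta> (crown_list xs ys) z"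
      using dir1[OF adm] by blast
  next
    assume Hc: "\<forall>xs ys z. weak_crown X xs ys \<and> z \<in> X \<longrightarrow> balanced_at X \<theta> (crown_list xs ys) z"
    have "admissible X \<theta>" unfolding admissible_def
    proof (intro allI impI)
      fix us z assume h: "walk X us \<and> closed_walk us \<and> z \<in> X"
      then have u: "us \<noteq> []" "set us \<subseteq> X" "adj cmpr us" "hd us = last us" and z: "z \<in> X"
        by (auto simp: walk_iff closed_walk_def)
      have H: "wsum (wt z) (crown_list xs ys) = 0" if wc: "weak_crown X xs ys" for xs ys
      proof -
        have b: "balanced_at X \<theta> (crown_list xs ys) z" using Hc wc z by blast
        have "set (crown_list xs ys) \<subseteq> X" "adj cmpr (crown_list xs ys)" using crown_semi[OF wc] by auto
        then show ?thesis using balanced_iff[of "crown_list xs ys" z] z b by simp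
      qed
      have "wsum (wt z) us = 0" using cycle_zero[OF H u] by blast
      then show "balanced_at X \<theta> us z" using balanced_iff[OF u(2,3) z] by simp
    qed
    then show "\<theta> \<in> AM_set X" using assms(3) by (simp add: AM_set_def)
  qed
qed

end
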